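(* Let $k,n,m$ be positive integers with $n+m\le k$ and let $q$ be a prime power. Let $\mathbb{T}$ be the set of $1$-dimensional subspaces of $\mathbb{F}_q^k$ and define $\mathbb{X}=\{\{T_1,\dots,T_n\}\subseteq\mathbb{T}: \dim(T_1+\cdots+T_n)=n\}$, $\mathbb{Y}=\{\{T_1,\dots,T_m\}\subseteq\mathbb{T}: \dim(T_1+\cdots+T_m)=m\}$, $\mathbb{Z}=\{\{T_1,\dots,T_{n+m}\}\subseteq\mathbb{T}: \dim(T_1+\cdots+T_{n+m})=n+m\}$. Let $B$ be the bipartite graph with left (user) vertex set $\mathbb{X}$, right (subfile) vertex set $\mathbb{Y}$, and $X\in\mathbb{X}$ adjacent to $Y\in\mathbb{Y}$ if and only if $X\cup Y\in\mathbb{Z}$. Then $B$ is a $(K,F,D)$ bipartite caching graph admitting an induced matching cover with $$S=\frac{1}{(n+m)!}\,q^{\frac{(n+m)(n+m-1)}{2}}\prod_{i=0}^{n+m-1}\binom{k-i}{1}_q$$ induced matchings, each having $g=\binom{n+m}{n}$ edges, and it defines a coded caching scheme (for $N\ge K$ files) with $$K=\frac{1}{n!}q^{\frac{n(n-1)}{2}}\prod_{i=0}^{n-1}\binom{k-i}{1}_q,\qquad F=\frac{1}{m!}q^{\frac{m(m-1)}{2}}\prod_{i=0}^{m-1}\binom{k-i}{1}_q,$$ $$\frac{M}{N}=1-q^{nm}\prod_{i=0}^{m-1}\frac{\binom{k-n-i}{1}_q}{\binom{k-i}{1}_q},\qquad R=\frac{m!\,q^{nm}}{(n+m)!}\,q^{\frac{n(n-1)}{2}}\prod_{i=0}^{n-1}\binom{k-m-i}{1}_q,$$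 and global caching gain $\gamma=\binom{n+m}{n}$.
   Context: $\binom{a}{1}_q=\frac{q^a-1}{q-1}$ is the number of $1$-dimensional subspaces of $\mathbb{F}_q^a$; $\binom{n+m}{n}$ is an ordinary binomial coefficient. Coded caching setup: a server holds $N$ files $W_1,\dots,W_N$ and is connected by an error-free broadcast link to $K$ users, each having a cache able to store $M$ files; it is assumed throughout that $N\ge K$. Each file is split into $F$ equal-size subfiles $W_{i,f}$, $f\in\mathcal{F}$, $|\mathcal{F}|=F$ ($F$ is the subpacketization). Caching is done before demands are known and is symmetric: for every user $k$ and index $f$, user $k$ caches either $W_{i,f}$ for all $i$ or for no $i$. In the delivery phase every user demands one file and the server broadcasts transmissions, each of the size of one subfile, so that every user can recover its demanded file from its cache and the transmissions, for every demand vector. The rate is $R=(\text{number of transmissions})/F$ and the global caching gain is $\gamma=K(1-M/N)/R$. A $(K,F,D)$ bipartite caching graph is a bipartite graph with $K$ left (user) vertices and $F$ right (subfile) vertices in which every left vertex has degree $D$; it defines the symmetric caching scheme in which user $k$ does not cache the subfiles with index $f$ exactly when $\{k,f\}$ is an edge (so $M/N=1-D/F$). An induced matching of a bipartite graph $B$ is a set $\mathcal{C}\subseteq E(B)$ such that for any two distinct edges $\{k_1,f_1\},\{k_2,f_2\}\in\mathcal{C}$ we have $k_1\ne k_2$, $f_1\ne f_2$ and $\{k_1,f_2\},\{k_2,f_1\}\notin E(B)$. An induced matching cover of $B$ is a set of induced matchings partitioning $E(B)$; each induced matching $\{\{k_i,f_i\}\}_i$ gives the transmission $\sum_i W_{d_{k_i},f_i}$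 where $W_{d_k}$ is the file demanded by user $k$. *)

theory Defs
  imports "HOL-Analysis.Analysis"
begin

definition bipartite :: "'u set \<Rightarrow> 'f set \<Rightarrow> ('u \<times> 'f) set \<Rightarrow> bool" where
  "bipartite L R E \<longleftrightarrow> finite L \<and> finite R \<and> E \<subseteq> L \<times> R"

definition caching_graph ::
  "'u set \<Rightarrow> 'f set \<Rightarrow> ('u \<times> 'f) set \<Rightarrow> nat \<Rightarrow> nat \<Rightarrow> nat \<Rightarrow> bool" where
  "caching_graph L R E K F D \<longleftrightarrow> bipartite L R E \<and> card L = K \<and> card R = F \<and>
     (\<forall>x\<in>L. card {y. (x, y) \<in> E} = D)"

definition induced_matching :: "('u \<times> 'f) set \<Rightarrow> ('u \<times> 'f) set \<Rightarrow> bool" where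
  "induced_matching E C \<longleftrightarrow> C \<subseteq> E \<and>
     (\<forall>k1 f1 k2 f2. (k1, f1) \<in> C \<and> (k2, f2) \<in> C \<and> (k1, f1) \<noteq> (k2, f2) \<longrightarrow>
        k1 \<noteq> k2 \<and> f1 \<noteq> f2 \<and> (k1, f2) \<notin> E \<and> (k2, f1) \<notin> E)"

definition induced_matching_cover :: "('u \<times> 'f) set \<Rightarrow> ('u \<times> 'f) set set \<Rightarrow> bool" where
  "induced_matching_cover E \<C> \<longleftrightarrow>
     (\<forall>C\<in>\<C>. induced_matching E C \<and> C \<noteq> {}) \<and>
     (\<forall>C1\<in>\<C>. \<forall>C2\<in>\<C>. C1 \<noteq> C2 \<longrightarrow> C1 \<inter> C2 = {}) \<and>
     \<Union>\<C> = E"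

text \<open>Parameters of the symmetric coded caching scheme defined by a (K,F,D)
caching graph and an induced matching cover: each induced matching gives one
transmission of subfile size, so R = (number of matchings)/F; M/N = 1 - D/F;
global caching gain gamma = K (1 - M/N) / R.\<close>
definition mem_ratio :: "nat \<Rightarrow> nat \<Rightarrow> real" where
  "mem_ratio F D = 1 - real D / real F"

definition cover_rate :: "nat \<Rightarrow> nat \<Rightarrow> real" where
  "cover_rate F S = real S / real F"

definition caching_gain :: "nat \<Rightarrow> real \<Rightarrow> real \<Rightarrow> real" where
  "caching_gain K MN R = real K * (1 - MN) / R"

definition qbin1 :: "nat \<Rightarrow> nat \<Rightarrow> real" where
  "qbin1 q a = (real q ^ a - 1) / (real q - 1)"

definition lines :: "('a::field ^ 'k) set set" where
  "lines = {T. vec.subspace T \<and> vec.dim T = 1}"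

text \<open>Sets of t one-dimensional subspaces whose sum has dimension t
(the dimension of T_1 + ... + T_t is the dimension of the span of their union).\<close>
definition indep_lines :: "nat \<Rightarrow> ('a::field ^ 'k) set set set" where
  "indep_lines t = {X. X \<subseteq> lines \<and> card X = t \<and> vec.dim (\<Union>X) = t}"

definition proj_edges :: "nat \<Rightarrow> nat \<Rightarrow>
    (('a::field ^ 'k) set set \<times> ('a ^ 'k) set set) set" where
  "proj_edges n m = {(X, Y). X \<in> indep_lines n \<and> Y \<in> indep_lines m \<and> X \<union> Y \<in> indep_lines (n + m)}"

end

theory Submission
  imports Defs
begin

lemma card_span_indep:
  fixes B :: "('a::{finite,field}^'k::finite) set"
  assumes "vec.independent B"
  shows "card (vec.span B) = CARD('a) ^ card B"
proof -
  have "finite B" by simp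
  then show ?thesis using assms
  proof (induction B rule: finite_induct)
    case empty
    then show ?case by simp
  next
    case (insert x F)
    have ind: "vec.independent F" and nx: "x \<notin> vec.span F"
      using insert.prems insert.hyps by (auto simp: vec.independent_insert)
    have eq: "vec.span (insert x F) = (\<lambda>(c,s). c *s x + s) ` (UNIV \<times> vec.span F)"
    proof
      show "vec.span (insert x F) \<subseteq> (\<lambda>(c,s). c *s x + s) ` (UNIV \<times> vec.span F)"
      proof
        fix y assume "y \<in> vec.span (insert x F)"
        then obtain c where c: "y - c *s x \<in> vec.span F" using vec.span_insert by blast
        then show "y \<in> (\<lambda>(c,s). c *s x + s) ` (UNIV \<times> vec.span F)"
          by (intro image_eqI[where x="(c, y - c *s x)"]) auto
      qed
    next
      show "(\<lambda>(c,s). c *s x + s) ` (UNIV \<times> vec.span F) \<subseteq> vec.span (insert x F)"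
      proof clarify
        fix a b assume "b \<in> vec.span F"
        then have "b \<in> vec.span (insert x F)" using vec.span_mono[of F "insert x F"] by blast
        moreover have "a *s x \<in> vec.span (insert x F)" by (intro vec.span_scale vec.span_base) simp
        ultimately show "a *s x + b \<in> vec.span (insert x F)" by (intro vec.span_add)
      qed
    qed
    have inj: "inj_on (\<lambda>(c,s). c *s x + s) (UNIV \<times> vec.span F)"
    proof (rule inj_onI, clarsimp)
      fix c1 s1 c2 s2
      assume s1: "s1 \<in> vec.span F" and s2: "s2 \<in> vec.span F" and e: "c1 *s x + s1 = c2 *s x + s2"
      have e2: "(c1 - c2) *s x = s2 - s1" using e
        by (simp add: vec.scale_left_diff_distrib algebra_simps)
      have "c1 = c2"
      proof (rule ccontr)
        assume "c1 \<noteq> c2"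
        then have "x = inverse (c1 - c2) *s ((c1 - c2) *s x)"
          by (simp only: vec.scale_scale) simp
        then have "x = inverse (c1 - c2) *s (s2 - s1)" by (simp only: e2)
        then have "x \<in> vec.span F" using s1 s2 vec.span_diff vec.span_scale by metis
        then show False using nx by simp
      qed
      then show "c1 = c2 \<and> s1 = s2" using e by simp
    qed
    have "card (vec.span (insert x F)) = CARD('a) * card (vec.span F)"
      unfolding eq card_image[OF inj] by (simp add: card_cartesian_product)
    then show ?case using insert ind by simp
  qed
qed

lemma card_span:
  fixes U :: "('a::{finite,field}^'k::finite) set"
  shows "card (vec.span U) = CARD('a) ^ vec.dim U"
proof -
  obtain B where B: "B \<subseteq> U" "vec.independent B" "U \<subseteq> vec.span B" "card B = vec.dim U"
    using vec.basis_exists[of U] by blast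
  have "vec.span B = vec.span U"
  proof
    show "vec.span B \<subseteq> vec.span U" using B(1) by (rule vec.span_mono)
    show "vec.span U \<subseteq> vec.span B" using B(3) vec.span_mono vec.span_span by metis
  qed
  then show ?thesis using card_span_indep[OF B(2)] B(4) by simp
qed

lemma line_span:
  fixes L :: "('a::{finite,field}^'k::finite) set"
  assumes "L \<in> lines"
  shows "\<exists>v. v \<noteq> 0 \<and> L = vec.span {v}"
proof -
  have sL: "vec.subspace L" and dL: "vec.dim L = 1" using assms by (auto simp: lines_def)
  obtain B where B: "B \<subseteq> L" "vec.independent B" "L \<subseteq> vec.span B" "card B = vec.dim L"
    using vec.basis_exists[of L] by blast
  then have "card B = 1" using dL by simp
  then obtain v where v: "B = {v}" by (auto simp: card_1_singleton_iff)
  have "vec.span {v} \<subseteq> L" using B(1) v sL vec.span_minimal by blast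
  moreover have "v \<noteq> 0" using B(2) v vec.dependent_zero by blast
  ultimately show ?thesis using B(3) v by blast
qed

lemma line_of:
  fixes v :: "'a::{finite,field}^'k::finite"
  assumes "v \<noteq> 0"
  shows "vec.span {v} \<in> lines"
proof -
  have "vec.dim {v} = 1" using assms vec.dim_insert[of v "{}"] by simp
  then show ?thesis unfolding lines_def by (simp add: vec.subspace_span)
qed

lemma line_gen:
  fixes L :: "('a::{finite,field}^'k::finite) set"
  assumes "L \<in> lines" "w \<in> L" "w \<noteq> 0"
  shows "L = vec.span {w}"
proof -
  obtain v where v: "v \<noteq> 0" "L = vec.span {v}" using line_span[OF assms(1)] by blast
  then obtain c where c: "w = c *s v" using assms(2) vec.span_singleton by blast
  then have c0: "c \<noteq> 0" using assms(3) by auto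
  have "v = inverse c *s w" using c c0 by (simp add: vec.scale_scale)
  then have "v \<in> vec.span {w}" by (simp add: vec.span_base vec.span_scale)
  then have "L \<subseteq> vec.span {w}" using v(2) vec.span_minimal[of "{v}" "vec.span {w}"] vec.subspace_span by blast
  moreover have "vec.span {w} \<subseteq> L" using assms(2) v(2) vec.span_minimal vec.subspace_span by blast
  ultimately show ?thesis by blast
qed

lemma card_line:
  fixes L :: "('a::{finite,field}^'k::finite) set"
  assumes "L \<in> lines"
  shows "card L = CARD('a)"
proof -
  have "vec.span L = L" and d: "vec.dim L = 1" using assms by (simp_all add: lines_def)
  then have "card L = card (vec.span L)" by (simp only:)
  also have "\<dots> = CARD('a)" using card_span[of L] d by simp
  finally show ?thesis .
qed

lemma dim_union_line:
  fixes L :: "('a::{finite,field}^'k::finite) set"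
  assumes "L \<in> lines"
  shows "vec.dim (S \<union> L) = (if L \<subseteq> vec.span S then vec.dim S else vec.dim S + 1)"
proof -
  obtain v where v: "v \<noteq> 0" "L = vec.span {v}" using line_span[OF assms] by blast
  have "vec.span (S \<union> L) = vec.span (insert v S)"
  proof
    have "S \<union> L \<subseteq> vec.span (insert v S)"
      using v(2) vec.span_mono[of "{v}" "insert v S"] vec.span_superset[of "insert v S"] by blast
    then show "vec.span (S \<union> L) \<subseteq> vec.span (insert v S)"
      using vec.span_minimal vec.subspace_span by blast
    have "insert v S \<subseteq> S \<union> L" using v(2) vec.span_superset by blast
    then show "vec.span (insert v S) \<subseteq> vec.span (S \<union> L)" by (rule vec.span_mono)
  qed
  then have "vec.dim (S \<union> L) = vec.dim (insert v S)" by (metis vec.dim_span)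
  moreover have "L \<subseteq> vec.span S \<longleftrightarrow> v \<in> vec.span S"
    using v(2) vec.span_superset[of "{v}"] vec.span_minimal[of "{v}" "vec.span S"] vec.subspace_span by blast
  moreover have "vec.dim (insert v S) = (if v \<in> vec.span S then vec.dim S else vec.dim S + 1)"
    by (rule vec.dim_insert)
  ultimately show ?thesis by simp
qed

lemma dim_le:
  fixes X :: "('a::{finite,field}^'k::finite) set set"
  assumes "X \<subseteq> lines"
  shows "vec.dim (W \<union> \<Union>X) \<le> vec.dim W + card X"
proof -
  have "finite X" by simp
  then show ?thesis using assms
  proof (induction X rule: finite_induct)
    case empty then show ?case by simp
  next
    case (insert L X)
    have "W \<union> \<Union>(insert L X) = (W \<union> \<Union>X) \<union> L" by blast
    then have "vec.dim (W \<union> \<Union>(insert L X)) \<le> vec.dim (W \<union> \<Union>X) + 1"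
      using dim_union_line[of L "W \<union> \<Union>X"] insert.prems by simp
    then show ?case using insert by simp
  qed
qed

lemma lines_outside:
  fixes U :: "('a::{finite,field}^'k::finite) set"
  shows "card {L \<in> (lines :: ('a^'k) set set). \<not> L \<subseteq> vec.span U} * (CARD('a) - 1)
         = CARD('a) ^ CARD('k) - CARD('a) ^ vec.dim U"
proof -
  define A where "A = {L \<in> (lines :: ('a^'k) set set). \<not> L \<subseteq> vec.span U}"
  define C where "C = (\<lambda>L. L - {0}) ` A"
  have inj: "inj_on (\<lambda>L. L - {0}) A"
  proof (rule inj_onI)
    fix L1 L2 assume "L1 \<in> A" "L2 \<in> A" "L1 - {0} = L2 - {0}"
    moreover have "0 \<in> L1" "0 \<in> L2" using \<open>L1 \<in> A\<close> \<open>L2 \<in> A\<close>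
      by (auto simp: A_def lines_def vec.subspace_0)
    ultimately show "L1 = L2" by blast
  qed
  have cc: "\<forall>c\<in>C. card c = CARD('a) - 1"
  proof
    fix c assume "c \<in> C"
    then obtain L where L: "L \<in> A" "c = L - {0}" by (auto simp: C_def)
    have "0 \<in> L" using L by (auto simp: A_def lines_def vec.subspace_0)
    then show "card c = CARD('a) - 1" using L card_line[of L] by (simp add: A_def)
  qed
  have disj: "\<forall>c1\<in>C. \<forall>c2\<in>C. c1 \<noteq> c2 \<longrightarrow> c1 \<inter> c2 = {}"
  proof (intro ballI impI)
    fix c1 c2 assume "c1 \<in> C" "c2 \<in> C" "c1 \<noteq> c2"
    then obtain L1 L2 where L: "L1 \<in> A" "c1 = L1 - {0}" "L2 \<in> A" "c2 = L2 - {0}" by (auto simp: C_def)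
    show "c1 \<inter> c2 = {}"
    proof (rule ccontr)
      assume "c1 \<inter> c2 \<noteq> {}"
      then obtain w where "w \<in> L1" "w \<in> L2" "w \<noteq> 0" using L by blast
      then have "L1 = L2" using line_gen[of L1 w] line_gen[of L2 w] L by (auto simp: A_def)
      then show False using L \<open>c1 \<noteq> c2\<close> by simp
    qed
  qed
  have un: "\<Union>C = UNIV - vec.span U"
  proof
    show "\<Union>C \<subseteq> UNIV - vec.span U"
    proof
      fix w assume "w \<in> \<Union>C"
      then obtain L where L: "L \<in> A" "w \<in> L" "w \<noteq> 0" by (auto simp: C_def)
      have Lw: "L = vec.span {w}" using line_gen[of L w] L by (auto simp: A_def)
      have "w \<notin> vec.span U"
      proof
        assume "w \<in> vec.span U"
        then have "L \<subseteq> vec.span U" using Lw vec.span_minimal[of "{w}" "vec.span U"] vec.subspace_span by blast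
        then show False using L by (auto simp: A_def)
      qed
      then show "w \<in> UNIV - vec.span U" by simp
    qed
  next
    show "UNIV - vec.span U \<subseteq> \<Union>C"
    proof
      fix w assume w: "w \<in> UNIV - vec.span U"
      then have w0: "w \<noteq> 0" using vec.span_zero by blast
      have ww: "w \<in> vec.span {w}" by (rule vec.span_base) simp
      then have "\<not> vec.span {w} \<subseteq> vec.span U" using w by blast
      then have "vec.span {w} \<in> A" unfolding A_def using line_of[OF w0] by blast
      moreover have "w \<in> vec.span {w} - {0}" using w0 ww by blast
      ultimately show "w \<in> \<Union>C" unfolding C_def by blast
    qed
  qed
  have "(CARD('a) - 1) * card C = card (\<Union>C)"
    apply (rule card_partition)
    subgoal by simp
    subgoal by simp
    subgoal using cc by blast
    subgoal using disj by blast
    done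
  also have "card (\<Union>C) = card (UNIV :: ('a^'k) set) - card (vec.span U)"
    unfolding un by (rule card_Diff_subset) simp_all
  also have "\<dots> = CARD('a) ^ CARD('k) - CARD('a) ^ vec.dim U"
    by (simp only: CARD_vec card_span)
  finally have "(CARD('a) - 1) * card A = CARD('a) ^ CARD('k) - CARD('a) ^ vec.dim U"
    using card_image[OF inj] unfolding C_def by simp
  then show ?thesis unfolding A_def by (simp only: mult.commute)
qed

definition fam :: "('a::{finite,field}^'k::finite) set \<Rightarrow> nat \<Rightarrow> ('a^'k) set set set" where
  "fam W t = {X. X \<subseteq> lines \<and> card X = t \<and> vec.dim (W \<union> \<Union>X) = vec.dim W + t}"

lemma fam_step:
  fixes W :: "('a::{finite,field}^'k::finite) set"
  shows "card (fam W (Suc t)) * Suc t * (CARD('a) - 1)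
         = card (fam W t) * (CARD('a) ^ CARD('k) - CARD('a) ^ (vec.dim W + t))"
proof -
  define Out where "Out = (\<lambda>X::('a^'k) set set. {L \<in> (lines :: ('a^'k) set set). \<not> L \<subseteq> vec.span (W \<union> \<Union>X)})"
  define P where "P = Sigma (fam W t) Out"
  define Q where "Q = Sigma (fam W (Suc t)) (\<lambda>Y. Y)"
  have "card P * (CARD('a) - 1) = (\<Sum>X\<in>fam W t. card (Out X) * (CARD('a) - 1))"
    unfolding P_def by (simp add: sum_distrib_right)
  also have "\<dots> = (\<Sum>X\<in>fam W t. CARD('a) ^ CARD('k) - CARD('a) ^ (vec.dim W + t))"
  proof (rule sum.cong[OF refl])
    fix X assume "X \<in> fam W t"
    then have "vec.dim (W \<union> \<Union>X) = vec.dim W + t" by (simp add: fam_def)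
    then show "card (Out X) * (CARD('a) - 1) = CARD('a) ^ CARD('k) - CARD('a) ^ (vec.dim W + t)"
      unfolding Out_def using lines_outside[of "W \<union> \<Union>X"] by simp
  qed
  also have "\<dots> = card (fam W t) * (CARD('a) ^ CARD('k) - CARD('a) ^ (vec.dim W + t))" by simp
  finally have cP: "card P * (CARD('a) - 1) = card (fam W t) * (CARD('a) ^ CARD('k) - CARD('a) ^ (vec.dim W + t))" .
  have cQ: "card Q = card (fam W (Suc t)) * Suc t"
    unfolding Q_def by (simp add: fam_def)
  have "bij_betw (\<lambda>(X, L). (insert L X, L)) P Q"
  proof (rule bij_betw_byWitness[where f'="\<lambda>(Y, L). (Y - {L}, L)"])
    show "\<forall>a\<in>P. (\<lambda>(Y, L). (Y - {L}, L)) ((\<lambda>(X, L). (insert L X, L)) a) = a"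
    proof
      fix a assume "a \<in> P"
      then obtain X L where a: "a = (X, L)" and X: "X \<in> fam W t" and L: "L \<in> Out X"
        by (auto simp: P_def)
      have "L \<notin> X"
      proof
        assume "L \<in> X"
        then have "L \<subseteq> W \<union> \<Union>X" by blast
        then have "L \<subseteq> vec.span (W \<union> \<Union>X)" using vec.span_superset by blast
        then show False using L by (simp add: Out_def)
      qed
      then show "(\<lambda>(Y, L). (Y - {L}, L)) ((\<lambda>(X, L). (insert L X, L)) a) = a" using a by simp
    qed
    show "\<forall>a'\<in>Q. (\<lambda>(X, L). (insert L X, L)) ((\<lambda>(Y, L). (Y - {L}, L)) a') = a'"
      by (auto simp: Q_def)
    show "(\<lambda>(X, L). (insert L X, L)) ` P \<subseteq> Q"
    proof (clarsimp simp: P_def Q_def)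
      fix X L assume X: "X \<in> fam W t" and L: "L \<in> Out X"
      have Xl: "X \<subseteq> lines" "card X = t" "vec.dim (W \<union> \<Union>X) = vec.dim W + t"
        using X by (auto simp: fam_def)
      have Ll: "L \<in> lines" and Ln: "\<not> L \<subseteq> vec.span (W \<union> \<Union>X)" using L by (auto simp: Out_def)
      have "L \<notin> X"
      proof
        assume "L \<in> X"
        then have "L \<subseteq> W \<union> \<Union>X" by blast
        then have "L \<subseteq> vec.span (W \<union> \<Union>X)" using vec.span_superset by blast
        then show False using Ln by simp
      qed
      have e: "W \<union> \<Union>(insert L X) = (W \<union> \<Union>X) \<union> L" by blast
      have "vec.dim (W \<union> \<Union>(insert L X)) = vec.dim W + Suc t"
        unfolding e using dim_union_line[OF Ll, of "W \<union> \<Union>X"] Ln Xl(3) by simp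
      moreover have "card (insert L X) = Suc t" using \<open>L \<notin> X\<close> Xl(2) by simp
      ultimately show "insert L X \<in> fam W (Suc t)" using Xl(1) Ll by (simp add: fam_def)
    qed
    show "(\<lambda>(Y, L). (Y - {L}, L)) ` Q \<subseteq> P"
    proof (clarsimp simp: P_def Q_def)
      fix Y L assume Y: "Y \<in> fam W (Suc t)" and L: "L \<in> Y"
      have Yl: "Y \<subseteq> lines" "card Y = Suc t" "vec.dim (W \<union> \<Union>Y) = vec.dim W + Suc t"
        using Y by (auto simp: fam_def)
      have Ll: "L \<in> lines" using L Yl(1) by blast
      define S where "S = W \<union> \<Union>(Y - {L})"
      have e: "W \<union> \<Union>Y = S \<union> L" using L unfolding S_def by blast
      have cY: "card (Y - {L}) = t" using Yl(2) L by simp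
      have le: "vec.dim S \<le> vec.dim W + t" unfolding S_def using dim_le[of "Y - {L}" W] Yl(1) cY by auto
      have d: "vec.dim (S \<union> L) = vec.dim W + Suc t" using e Yl(3) by simp
      have nL: "\<not> L \<subseteq> vec.span S"
      proof
        assume "L \<subseteq> vec.span S"
        then have "vec.dim (S \<union> L) = vec.dim S" using dim_union_line[OF Ll, of S] by simp
        then show False using d le by simp
      qed
      then have dS: "vec.dim S = vec.dim W + t" using dim_union_line[OF Ll, of S] d by simp
      have "Y - {L} \<in> fam W t" using Yl(1) cY dS unfolding fam_def S_def by auto
      moreover have "L \<in> Out (Y - {L})" using nL Ll unfolding Out_def S_def by simp
      ultimately show "Y - {L} \<in> fam W t \<and> L \<in> Out (Y - {L})" by simp
    qed
  qed
  then have "card P = card Q" by (rule bij_betw_same_card)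
  then show ?thesis using cP cQ by simp
qed

lemma fam_zero:
  fixes W :: "('a::{finite,field}^'k::finite) set"
  shows "fam W 0 = {{}}"
  by (auto simp: fam_def)

lemma fam_count:
  fixes W :: "('a::{finite,field}^'k::finite) set"
  shows "card (fam W t) * fact t * (CARD('a) - 1) ^ t
         = (\<Prod>i<t. CARD('a) ^ CARD('k) - CARD('a) ^ (vec.dim W + i))"
proof (induction t)
  case 0
  then show ?case by (simp add: fam_zero)
next
  case (Suc t)
  have "card (fam W (Suc t)) * fact (Suc t) * (CARD('a) - 1) ^ Suc t
        = (card (fam W (Suc t)) * Suc t * (CARD('a) - 1)) * (fact t * (CARD('a) - 1) ^ t)"
    by (simp add: algebra_simps)
  also have "\<dots> = (card (fam W t) * fact t * (CARD('a) - 1) ^ t) * (CARD('a) ^ CARD('k) - CARD('a) ^ (vec.dim W + t))"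
    unfolding fam_step by (simp add: algebra_simps)
  also have "\<dots> = (\<Prod>i<Suc t. CARD('a) ^ CARD('k) - CARD('a) ^ (vec.dim W + i))"
    using Suc.IH by simp
  finally show ?case .
qed

lemma prod_split_add: "(\<Prod>i<a + b. f i) = (\<Prod>i<a. f i) * (\<Prod>i<b. f (a + i))"
  for f :: "nat \<Rightarrow> real"
  by (induction b) (simp_all add: algebra_simps)

lemma sum_split_add: "(\<Sum>i<a + b. f i) = (\<Sum>i<a. f i) + (\<Sum>i<b. f (a + i))"
  for f :: "nat \<Rightarrow> nat"
  by (induction b) (simp_all add: algebra_simps)

lemma tri_sum: "(\<Sum>i<t. (i::nat)) = t * (t - 1) div 2"
proof -
  have "2 * (\<Sum>i<t. (i::nat)) = t * (t - 1)"
  proof (induction t)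
    case 0 then show ?case by simp
  next
    case (Suc t) then show ?case by (cases t) (simp_all add: algebra_simps)
  qed
  then show ?thesis by simp
qed

lemma tri_add: "((a::nat) + b) * (a + b - 1) div 2 = a * (a - 1) div 2 + a * b + b * (b - 1) div 2"
proof -
  have "(\<Sum>i<a + b. (i::nat)) = (\<Sum>i<a. i) + (\<Sum>i<b. a + i)" by (rule sum_split_add)
  also have "(\<Sum>i<b. a + i) = a * b + (\<Sum>i<b. i)" by (simp add: sum.distrib)
  finally show ?thesis by (simp add: tri_sum)
qed

lemma card_ge2: "CARD('a::{finite,field}) \<ge> 2"
proof -
  have "card {0::'a, 1} = 2" by simp
  moreover have "card {0::'a, 1} \<le> CARD('a)" by (rule card_mono) simp_all
  ultimately show ?thesis by simp
qed

lemma qbin1_pos: "q \<ge> 2 \<Longrightarrow> a \<ge> 1 \<Longrightarrow> qbin1 q a > 0"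
  unfolding qbin1_def
  by (intro divide_pos_pos) (auto simp: one_less_power)

lemma fam_real:
  fixes W :: "('a::{finite,field}^'k::finite) set"
  assumes "vec.dim W = d" "d + t \<le> CARD('k)"
  shows "real (card (fam W t)) = 1 / fact t * real CARD('a) ^ (d * t + t * (t - 1) div 2)
            * (\<Prod>i<t. qbin1 CARD('a) (CARD('k) - d - i))"
proof -
  let ?q = "CARD('a)" and ?k = "CARD('k)"
  have q2: "?q \<ge> 2" by (rule card_ge2)
  have q1: "real ?q - 1 > 0" using q2 by simp
  have "real (card (fam W t) * fact t * (?q - 1) ^ t) = real (\<Prod>i<t. ?q ^ ?k - ?q ^ (d + i))"
    using fam_count[of W t] assms(1) by simp
  then have eq: "real (card (fam W t)) * fact t * (real ?q - 1) ^ t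
      = (\<Prod>i<t. real ?q ^ ?k - real ?q ^ (d + i))"
  proof -
    assume h: "real (card (fam W t) * fact t * (?q - 1) ^ t) = real (\<Prod>i<t. ?q ^ ?k - ?q ^ (d + i))"
    have "real (\<Prod>i<t. ?q ^ ?k - ?q ^ (d + i)) = (\<Prod>i<t. real (?q ^ ?k - ?q ^ (d + i)))"
      by (rule of_nat_prod)
    also have "\<dots> = (\<Prod>i<t. real ?q ^ ?k - real ?q ^ (d + i))"
    proof (rule prod.cong[OF refl])
      fix i assume "i \<in> {..<t}"
      then have "d + i \<le> ?k" using assms(2) by simp
      then have "?q ^ (d + i) \<le> ?q ^ ?k" using q2 by (intro power_increasing) auto
      then show "real (?q ^ ?k - ?q ^ (d + i)) = real ?q ^ ?k - real ?q ^ (d + i)"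
        by (simp add: of_nat_diff)
    qed
    finally show ?thesis using h q2 by (simp add: of_nat_diff)
  qed
  have trm: "real ?q ^ ?k - real ?q ^ (d + i) = (real ?q - 1) * (real ?q ^ (d + i) * qbin1 ?q (?k - d - i))"
    if "i < t" for i
  proof -
    have "?k = (d + i) + (?k - d - i)" using that assms(2) by simp
    then have "real ?q ^ ?k = real ?q ^ (d + i) * real ?q ^ (?k - d - i)"
      by (metis power_add)
    then show ?thesis using q1 unfolding qbin1_def by (simp add: field_simps)
  qed
  have "(\<Prod>i<t. real ?q ^ ?k - real ?q ^ (d + i))
      = (\<Prod>i<t. (real ?q - 1) * (real ?q ^ (d + i) * qbin1 ?q (?k - d - i)))"
    using trm by (intro prod.cong) auto
  also have "\<dots> = (real ?q - 1) ^ t * ((\<Prod>i<t. real ?q ^ (d + i)) * (\<Prod>i<t. qbin1 ?q (?k - d - i)))"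
    by (simp add: prod.distrib)
  also have "(\<Prod>i<t. real ?q ^ (d + i)) = real ?q ^ (\<Sum>i<t. d + i)"
    by (simp add: power_sum)
  also have "(\<Sum>i<t. d + i) = d * t + t * (t - 1) div 2"
    by (simp add: sum.distrib tri_sum)
  finally have "real (card (fam W t)) * fact t * (real ?q - 1) ^ t
     = (real ?q - 1) ^ t * (real ?q ^ (d * t + t * (t - 1) div 2) * (\<Prod>i<t. qbin1 ?q (?k - d - i)))"
    using eq by simp
  then show ?thesis using q1 by (simp add: field_simps)
qed

lemma indep_sub:
  fixes Z :: "('a::{finite,field}^'k::finite) set set"
  assumes "Z \<subseteq> lines" "vec.dim (\<Union>Z) = card Z" "X \<subseteq> Z"
  shows "vec.dim (\<Union>X) = card X"
proof -
  have XZ: "X \<subseteq> lines" "Z - X \<subseteq> lines" using assms by auto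
  have "\<Union>Z = \<Union>X \<union> \<Union>(Z - X)" using assms(3) by blast
  then have "vec.dim (\<Union>Z) \<le> vec.dim (\<Union>X) + card (Z - X)" using dim_le[OF XZ(2), of "\<Union>X"] by simp
  moreover have "card Z = card X + card (Z - X)"
    using assms(3) by (simp add: card_Diff_subset card_mono)
  moreover have "vec.dim ({} \<union> \<Union>X) \<le> vec.dim ({}::('a^'k) set) + card X" by (rule dim_le[OF XZ(1)])
  ultimately show ?thesis using assms(2) by simp
qed

lemma indep_lines_fam: "indep_lines t = fam ({}::('a::{finite,field}^'k::finite) set) t"
  by (auto simp: indep_lines_def fam_def)

lemma nbr:
  fixes X :: "('a::{finite,field}^'k::finite) set set"
  assumes "X \<in> indep_lines n"
  shows "{Y. (X, Y) \<in> proj_edges n m} = fam (\<Union>X) m"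
proof -
  have X: "X \<subseteq> lines" "card X = n" "vec.dim (\<Union>X) = n" using assms by (auto simp: indep_lines_def)
  show ?thesis
  proof (intro set_eqI iffI)
    fix Y assume "Y \<in> {Y. (X, Y) \<in> proj_edges n m}"
    then have Y: "Y \<in> indep_lines m" "X \<union> Y \<in> indep_lines (n + m)" by (auto simp: proj_edges_def)
    have "\<Union>X \<union> \<Union>Y = \<Union>(X \<union> Y)" by blast
    then show "Y \<in> fam (\<Union>X) m" using Y X by (auto simp: indep_lines_def fam_def)
  next
    fix Y assume "Y \<in> fam (\<Union>X) m"
    then have Y: "Y \<subseteq> lines" "card Y = m" "vec.dim (\<Union>X \<union> \<Union>Y) = n + m" using X by (auto simp: fam_def)
    have "vec.dim (\<Union>Y \<union> \<Union>X) \<le> vec.dim (\<Union>Y) + card X" by (rule dim_le[OF X(1)])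
    moreover have "vec.dim ({} \<union> \<Union>Y) \<le> vec.dim ({}::('a^'k) set) + card Y" by (rule dim_le[OF Y(1)])
    moreover have "\<Union>Y \<union> \<Union>X = \<Union>X \<union> \<Union>Y" by blast
    ultimately have dY: "vec.dim (\<Union>Y) = m" using X Y by simp
    have XY: "X \<union> Y \<subseteq> lines" using X Y by simp
    have u: "\<Union>(X \<union> Y) = \<Union>X \<union> \<Union>Y" by blast
    have "vec.dim ({} \<union> \<Union>(X \<union> Y)) \<le> vec.dim ({}::('a^'k) set) + card (X \<union> Y)" by (rule dim_le[OF XY])
    moreover have "card (X \<union> Y) \<le> card X + card Y" by (rule card_Un_le)
    ultimately have "card (X \<union> Y) = n + m" using X Y u by simp
    then have "X \<union> Y \<in> indep_lines (n + m)" using XY Y u by (simp add: indep_lines_def)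
    moreover have "Y \<in> indep_lines m" using Y dY by (simp add: indep_lines_def)
    ultimately show "Y \<in> {Y. (X, Y) \<in> proj_edges n m}" using assms by (simp add: proj_edges_def)
  qed
qed

definition CZ :: "nat \<Rightarrow> 'b set \<Rightarrow> ('b set \<times> 'b set) set" where
  "CZ n Z = (\<lambda>X. (X, Z - X)) ` {X. X \<subseteq> Z \<and> card X = n}"

lemma CZ_un: "p \<in> CZ n Z \<Longrightarrow> fst p \<union> snd p = Z"
  by (auto simp: CZ_def)

lemma CZ_props:
  fixes Z :: "('a::{finite,field}^'k::finite) set set"
  assumes Z: "Z \<in> indep_lines (n + m)"
  shows "CZ n Z \<subseteq> proj_edges n m" "induced_matching (proj_edges n m) (CZ n Z)"
        "CZ n Z \<noteq> {}" "card (CZ n Z) = (n + m) choose n"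
proof -
  have Zl: "Z \<subseteq> lines" "card Z = n + m" "vec.dim (\<Union>Z) = n + m" using Z by (auto simp: indep_lines_def)
  have fZ: "finite Z" by simp
  show sub: "CZ n Z \<subseteq> proj_edges n m"
  proof
    fix p assume "p \<in> CZ n Z"
    then obtain X where p: "p = (X, Z - X)" "X \<subseteq> Z" "card X = n" by (auto simp: CZ_def)
    have "vec.dim (\<Union>X) = card X" using indep_sub[OF Zl(1) _ p(2)] Zl by simp
    then have "X \<in> indep_lines n" using p Zl by (auto simp: indep_lines_def)
    moreover have "card (Z - X) = m" using p Zl by (simp add: card_Diff_subset card_mono)
    moreover have "vec.dim (\<Union>(Z - X)) = card (Z - X)" using indep_sub[OF Zl(1) _, of "Z - X"] Zl by simp
    ultimately have "Z - X \<in> indep_lines m" using Zl(1) by (auto simp: indep_lines_def)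
    moreover have "X \<union> (Z - X) \<in> indep_lines (n + m)"
    proof -
      have "X \<union> (Z - X) = Z" using p(2) by blast
      then show ?thesis using Z by (simp only:)
    qed
    ultimately show "p \<in> proj_edges n m" using p(1) \<open>X \<in> indep_lines n\<close> by (simp add: proj_edges_def)
  qed
  show "induced_matching (proj_edges n m) (CZ n Z)"
    unfolding induced_matching_def
  proof (rule conjI[OF sub], intro allI impI)
    fix k1 f1 k2 f2
    assume h: "(k1, f1) \<in> CZ n Z \<and> (k2, f2) \<in> CZ n Z \<and> (k1, f1) \<noteq> (k2, f2)"
    then have a: "f1 = Z - k1" "k1 \<subseteq> Z" "card k1 = n" "f2 = Z - k2" "k2 \<subseteq> Z" "card k2 = n"
      by (auto simp: CZ_def)
    have cf: "card f1 = m" "card f2 = m" using a Zl by (simp_all add: card_Diff_subset card_mono)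
    have ne: "k1 \<noteq> k2" using h a by auto
    have nf: "f1 \<noteq> f2"
    proof
      assume "f1 = f2"
      then have "Z - f1 = Z - f2" by simp
      then have "k1 = k2" using a by blast
      then show False using ne by simp
    qed
    have noedge: "(x, Z - y) \<notin> proj_edges n m"
      if xy: "x \<subseteq> Z" "card x = n" "y \<subseteq> Z" "card y = n" "x \<noteq> y" for x y
    proof
      assume "(x, Z - y) \<in> proj_edges n m"
      then have c: "card (x \<union> (Z - y)) = n + m" by (auto simp: proj_edges_def indep_lines_def)
      have "card (Z - y) = m" using xy Zl by (simp add: card_Diff_subset card_mono)
      then have "card (x \<inter> (Z - y)) = 0"
        using card_Un_Int[of x "Z - y"] c xy by simp
      then have "x \<inter> (Z - y) = {}" by simp
      then have "x \<subseteq> y" using xy by blast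
      then have "x = y" using xy by (simp add: card_subset_eq)
      then show False using xy by simp
    qed
    have "(k1, f2) \<notin> proj_edges n m" using noedge[of k1 k2] a ne by simp
    moreover have "(k2, f1) \<notin> proj_edges n m" using noedge[of k2 k1] a ne by simp
    ultimately show "k1 \<noteq> k2 \<and> f1 \<noteq> f2 \<and> (k1, f2) \<notin> proj_edges n m \<and> (k2, f1) \<notin> proj_edges n m"
      using ne nf by blast
  qed
  have "n \<le> card Z" using Zl by simp
  then obtain X where "X \<subseteq> Z" "card X = n" by (rule obtain_subset_with_card_n)
  then show "CZ n Z \<noteq> {}" by (auto simp: CZ_def)
  have "inj_on (\<lambda>X. (X, Z - X)) {X. X \<subseteq> Z \<and> card X = n}" by (rule inj_onI) simp
  then have "card (CZ n Z) = card {X. X \<subseteq> Z \<and> card X = n}" unfolding CZ_def by (rule card_image)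
  also have "\<dots> = (n + m) choose n" using n_subsets[OF fZ, of n] Zl by simp
  finally show "card (CZ n Z) = (n + m) choose n" .
qed

lemma cover:
  shows "induced_matching_cover (proj_edges n m :: (('a::{finite,field}^'k::finite) set set \<times> _) set)
            (CZ n ` indep_lines (n + m))"
        "card (CZ n ` (indep_lines (n + m) :: ('a^'k) set set set)) = card (indep_lines (n + m) :: ('a^'k) set set set)"
proof -
  have inj: "inj_on (CZ n) (indep_lines (n + m) :: ('a^'k) set set set)"
  proof (rule inj_onI)
    fix Z1 Z2 :: "('a^'k) set set"
    assume Z: "Z1 \<in> indep_lines (n + m)" "Z2 \<in> indep_lines (n + m)" "CZ n Z1 = CZ n Z2"
    obtain p where p1: "p \<in> CZ n Z1" using CZ_props(3)[OF Z(1)] by blast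
    then have p2: "p \<in> CZ n Z2" using Z(3) by simp
    show "Z1 = Z2" using CZ_un[OF p1] CZ_un[OF p2] by simp
  qed
  then show "card (CZ n ` (indep_lines (n + m) :: ('a^'k) set set set)) = card (indep_lines (n + m) :: ('a^'k) set set set)"
    by (rule card_image)
  show "induced_matching_cover (proj_edges n m :: (('a::{finite,field}^'k::finite) set set \<times> _) set)
            (CZ n ` indep_lines (n + m))"
    unfolding induced_matching_cover_def
  proof (intro conjI ballI impI)
    fix C assume "C \<in> CZ n ` (indep_lines (n + m) :: ('a^'k) set set set)"
    then obtain Z where "Z \<in> (indep_lines (n + m) :: ('a^'k) set set set)" "C = CZ n Z" by blast
    then show "induced_matching (proj_edges n m) C" "C \<noteq> {}" using CZ_props(2,3) by simp_all
  next
    fix C1 C2 assume C: "C1 \<in> CZ n ` (indep_lines (n + m) :: ('a^'k) set set set)"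
      "C2 \<in> CZ n ` (indep_lines (n + m) :: ('a^'k) set set set)" "C1 \<noteq> C2"
    then obtain Z1 Z2 where Z: "C1 = CZ n Z1" "C2 = CZ n Z2" by blast
    show "C1 \<inter> C2 = {}"
    proof (rule ccontr)
      assume "C1 \<inter> C2 \<noteq> {}"
      then obtain p where p1: "p \<in> CZ n Z1" and p2: "p \<in> CZ n Z2" using Z by blast
      have "Z1 = Z2" using CZ_un[OF p1] CZ_un[OF p2] by simp
      then show False using Z C by simp
    qed
  next
    show "\<Union>(CZ n ` (indep_lines (n + m) :: ('a^'k) set set set)) = proj_edges n m"
    proof
      show "\<Union>(CZ n ` (indep_lines (n + m) :: ('a^'k) set set set)) \<subseteq> proj_edges n m"
      proof (rule UN_least)
        fix Z :: "('a^'k) set set" assume "Z \<in> indep_lines (n + m)"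
        then show "CZ n Z \<subseteq> proj_edges n m" by (rule CZ_props(1))
      qed
      show "proj_edges n m \<subseteq> \<Union>(CZ n ` (indep_lines (n + m) :: ('a^'k) set set set))"
      proof
        fix p assume "p \<in> (proj_edges n m :: (('a^'k) set set \<times> _) set)"
        then obtain X Y where p: "p = (X, Y)" "X \<in> indep_lines n" "Y \<in> indep_lines m"
          "X \<union> Y \<in> indep_lines (n + m)" by (auto simp: proj_edges_def)
        have c: "card X = n" "card Y = m" "card (X \<union> Y) = n + m" using p by (auto simp: indep_lines_def)
        then have "card (X \<inter> Y) = 0" using card_Un_Int[of X Y] by simp
        then have "X \<inter> Y = {}" by simp
        then have "(X \<union> Y) - X = Y" by blast
        moreover have "X \<in> {X'. X' \<subseteq> X \<union> Y \<and> card X' = n}" using c by simp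
        ultimately have "p \<in> CZ n (X \<union> Y)" unfolding CZ_def using p(1)
          by (intro image_eqI[where x=X]) simp_all
        then show "p \<in> \<Union>(CZ n ` (indep_lines (n + m) :: ('a^'k) set set set))" using p by blast
      qed
    qed
  qed
qed

lemma div_helper: "(f::real) \<noteq> 0 \<Longrightarrow> x * (d / f) / (s / f) = x * d / s"
  by (cases "s = 0") (simp_all add: field_simps)

theorem theorem3:
  fixes n m :: nat
  assumes "0 < n" and "0 < m" and "n + m \<le> CARD('k)"
  shows "let q = CARD('a::{finite,field}); k = CARD('k::finite);
             L = (indep_lines n :: ('a ^ 'k) set set set);
             R = (indep_lines m :: ('a ^ 'k) set set set);
             E = (proj_edges n m :: (('a ^ 'k) set set \<times> ('a ^ 'k) set set) set)
         in \<exists>K F D \<C>.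
              caching_graph L R E K F D \<and>
              real K = 1 / fact n * real q ^ (n * (n - 1) div 2) * (\<Prod>i<n. qbin1 q (k - i)) \<and>
              real F = 1 / fact m * real q ^ (m * (m - 1) div 2) * (\<Prod>i<m. qbin1 q (k - i)) \<and>
              induced_matching_cover E \<C> \<and>
              real (card \<C>) = 1 / fact (n + m) * real q ^ ((n + m) * (n + m - 1) div 2)
                                * (\<Prod>i<n + m. qbin1 q (k - i)) \<and>
              (\<forall>C\<in>\<C>. card C = (n + m) choose n) \<and>
              mem_ratio F D = 1 - real q ^ (n * m) * (\<Prod>i<m. qbin1 q (k - n - i) / qbin1 q (k - i)) \<and>
              cover_rate F (card \<C>) = fact m * real q ^ (n * m) / fact (n + m)
                                * real q ^ (n * (n - 1) div 2) * (\<Prod>i<n. qbin1 q (k - m - i)) \<and>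
              caching_gain K (mem_ratio F D) (cover_rate F (card \<C>)) = real ((n + m) choose n)"
proof -
  let ?q = "CARD('a)" and ?k = "CARD('k)"
  let ?L = "indep_lines n :: ('a ^ 'k) set set set"
  let ?R = "indep_lines m :: ('a ^ 'k) set set set"
  let ?Z = "indep_lines (n + m) :: ('a ^ 'k) set set set"
  let ?E = "proj_edges n m :: (('a ^ 'k) set set \<times> ('a ^ 'k) set set) set"
  let ?C = "CZ n ` ?Z"
  define Q where "Q = real ?q"
  define e where "e t = t * (t - 1) div 2" for t :: nat
  define A where "A t = (\<Prod>i<t. qbin1 ?q (?k - i))" for t
  define B where "B = (\<Prod>i<m. qbin1 ?q (?k - n - i))"
  define C where "C = (\<Prod>i<n. qbin1 ?q (?k - m - i))"
  have q2: "?q \<ge> 2" by (rule card_ge2)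
  have Qpos: "Q > 0" using q2 by (simp add: Q_def)
  have Apos: "A t > 0" if "t \<le> ?k" for t
    unfolding A_def using that q2 by (intro prod_pos) (auto intro!: qbin1_pos)
  have Bpos: "B > 0" unfolding B_def using q2 assms by (intro prod_pos) (auto intro!: qbin1_pos)
  have Anm1: "A (n + m) = A m * C"
    unfolding A_def C_def using prod_split_add[of "\<lambda>i. qbin1 ?q (?k - i)" m n] by (simp add: add.commute diff_diff_left)
  have Anm2: "A (n + m) = A n * B"
    unfolding A_def B_def using prod_split_add[of "\<lambda>i. qbin1 ?q (?k - i)" n m] by (simp add: diff_diff_left)
  have enm: "e (n + m) = e n + n * m + e m" unfolding e_def by (rule tri_add)
  have G0: "real (card (indep_lines t :: ('a ^ 'k) set set set)) = 1 / fact t * Q ^ e t * A t"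
    if "t \<le> ?k" for t
    using fam_real[of "{}::('a^'k) set" 0 t] that unfolding indep_lines_fam Q_def e_def A_def by simp
  have GK: "real (card ?L) = 1 / fact n * Q ^ e n * A n" using G0 assms by simp
  have GF: "real (card ?R) = 1 / fact m * Q ^ e m * A m" using G0 assms by simp
  have GS: "real (card ?Z) = 1 / fact (n + m) * Q ^ e (n + m) * A (n + m)" using G0 assms by simp
  have GD: "real (card {y. (x, y) \<in> ?E}) = 1 / fact m * Q ^ (n * m + e m) * B" if "x \<in> ?L" for x
  proof -
    have "vec.dim (\<Union>x) = n" using that by (simp add: indep_lines_def)
    then show ?thesis unfolding nbr[OF that] using fam_real[of "\<Union>x" n m] assms
      unfolding Q_def e_def B_def by (simp add: mult.commute)
  qed
  have "real (card ?L) > 0" unfolding GK using Apos[of n] assms Qpos by simp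
  then obtain x0 where x0: "x0 \<in> ?L" by (metis card.empty less_irrefl of_nat_0 equals0I)
  define D where "D = card {y. (x0, y) \<in> ?E}"
  have deg: "\<forall>x\<in>?L. card {y. (x, y) \<in> ?E} = D"
  proof
    fix x assume "x \<in> ?L"
    then have "real (card {y. (x, y) \<in> ?E}) = real D" unfolding D_def using GD x0 by simp
    then show "card {y. (x, y) \<in> ?E} = D" by (simp only: of_nat_eq_iff)
  qed
  have GD0: "real D = 1 / fact m * Q ^ (n * m + e m) * B" unfolding D_def using GD[OF x0] .
  have cg: "caching_graph ?L ?R ?E (card ?L) (card ?R) D"
    unfolding caching_graph_def bipartite_def using deg by (auto simp: proj_edges_def)
  have cC: "real (card ?C) = 1 / fact (n + m) * Q ^ e (n + m) * A (n + m)"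
  proof -
    have "card ?C = card ?Z" by (rule cover(2))
    then show ?thesis using GS by simp
  qed
  have Fpos: "real (card ?R) > 0" unfolding GF using Apos[of m] assms Qpos by simp
  have mr: "mem_ratio (card ?R) D = 1 - Q ^ (n * m) * (\<Prod>i<m. qbin1 ?q (?k - n - i) / qbin1 ?q (?k - i))"
  proof -
    have "(\<Prod>i<m. qbin1 ?q (?k - n - i) / qbin1 ?q (?k - i)) = B / A m"
      unfolding A_def B_def by (rule prod_dividef)
    moreover have "real D / real (card ?R) = Q ^ (n * m) * (B / A m)"
      unfolding GD0 GF using Apos[of m] assms Qpos by (simp add: power_add field_simps)
    ultimately show ?thesis unfolding mem_ratio_def by simp
  qed
  have cr: "cover_rate (card ?R) (card ?C) = fact m * Q ^ (n * m) / fact (n + m) * Q ^ e n * C"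
    unfolding cover_rate_def cC GF Anm1 enm using Apos[of m] assms Qpos
    by (simp add: power_add field_simps)
  have gain: "caching_gain (card ?L) (mem_ratio (card ?R) D) (cover_rate (card ?R) (card ?C))
      = real ((n + m) choose n)"
  proof -
    have "caching_gain (card ?L) (mem_ratio (card ?R) D) (cover_rate (card ?R) (card ?C))
        = real (card ?L) * (real D / real (card ?R)) / (real (card ?C) / real (card ?R))"
      unfolding caching_gain_def mem_ratio_def cover_rate_def by simp
    also have "\<dots> = real (card ?L) * real D / real (card ?C)" by (rule div_helper) (use Fpos in linarith)
    also have "\<dots> = fact (n + m) / (fact n * fact m)"
      unfolding GK GD0 cC Anm2 enm using Apos[of n] Bpos assms Qpos
      by (simp add: power_add field_simps)
    also have "\<dots> = real ((n + m) choose n)"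
    proof -
      have "real ((n + m) choose n) = fact (n + m) / (fact n * fact (n + m - n))"
        by (rule binomial_fact) simp
      then show ?thesis by simp
    qed
    finally show ?thesis .
  qed
  show ?thesis
    unfolding Let_def
  proof (intro exI conjI)
    show "caching_graph ?L ?R ?E (card ?L) (card ?R) D" by (rule cg)
    show "real (card ?L) = 1 / fact n * real ?q ^ (n * (n - 1) div 2) * (\<Prod>i<n. qbin1 ?q (?k - i))"
      using GK unfolding Q_def e_def A_def .
    show "real (card ?R) = 1 / fact m * real ?q ^ (m * (m - 1) div 2) * (\<Prod>i<m. qbin1 ?q (?k - i))"
      using GF unfolding Q_def e_def A_def .
    show "induced_matching_cover ?E ?C" by (rule cover(1))
    show "real (card ?C) = 1 / fact (n + m) * real ?q ^ ((n + m) * (n + m - 1) div 2)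
                                * (\<Prod>i<n + m. qbin1 ?q (?k - i))"
      using cC unfolding Q_def e_def A_def .
    show "\<forall>X\<in>?C. card X = (n + m) choose n" using CZ_props(4) by blast
    show "mem_ratio (card ?R) D = 1 - real ?q ^ (n * m) * (\<Prod>i<m. qbin1 ?q (?k - n - i) / qbin1 ?q (?k - i))"
      using mr unfolding Q_def .
    show "cover_rate (card ?R) (card ?C) = fact m * real ?q ^ (n * m) / fact (n + m)
                                * real ?q ^ (n * (n - 1) div 2) * (\<Prod>i<n. qbin1 ?q (?k - m - i))"
      using cr unfolding Q_def e_def C_def .
    show "caching_gain (card ?L) (mem_ratio (card ?R) D) (cover_rate (card ?R) (card ?C)) = real ((n + m) choose n)"
      by (rule gain)
  qed
qed

end
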